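(* Let $R$ be the holistic system robustness random variable (defined in the context), with distribution $\pi_R$, so that $\mathbb{P}_{\pi_R}[-R\le a]=1$. Let $\alpha\in(0,1]$ and define \[ L(x,\mu,t)=t\left(\mu+e^{\frac{x}{t}-\mu-\ln(\alpha)-1}\right),\qquad u_b(\mu,t)=L(a,\mu,t). \] For $N$ independent samples $r_1,\dots,r_N$ of $R$, let $\zeta^*_N(\mu,t)=\max_{1\le k\le N}L(-r_k,\mu,t)$. Then for all $\epsilon\in[0,1]$, \[ \mathbb{P}^N_{\pi_R}\left[r^*_E\triangleq\inf_{\mu\in\mathbb{R},\ t>0}\zeta^*_N(\mu,t)(1-\epsilon)+u_b(\mu,t)\epsilon\ \ge\ \mathrm{EVaR}_\alpha(-R)\right]\ge 1-(1-\epsilon)^N. \]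
   Context: System setting: $\dot x = f(x,u)+\xi$, $x\in\mathcal{X}\subset\mathbb{R}^n$, $u=U(x,\theta)\in\mathcal{U}\subset\mathbb{R}^m$, $\theta\in\Theta\subset\mathbb{R}^p$ a parameter fixed along a trajectory, and $\xi$ stochastic noise with unknown distribution $\pi_\xi(x,u,t)$. $x^\theta$ denotes the resulting closed-loop state signal in $\mathcal{S}=\{s:\mathbb{R}_{\ge0}\to\mathbb{R}^n\}$ from an initial condition $x_0\in\mathcal{X}_0\subseteq\mathcal{X}$. A robustness metric is a function $\rho:\mathcal{S}\to[-a,b]$ with $a,b>0$ such that $\rho(s)\ge0$ only for signals exhibiting desired properties. The holistic system robustness $R$ is the scalar random variable whose samples are $r=\rho(x^\theta)$, where $(x_0,\theta)$ is sampled uniformly from $\mathcal{X}_0\times\Theta$. Entropic-Value-at-Risk: $\mathrm{EVaR}_\alpha(Z)=\inf_{z>0}\frac1z\ln\left(\frac{\mathbb{E}[e^{zZ}]}{\alpha}\right)$. $\zeta^*_N(\mu,t)$ is the solution of $\min_\zeta\zeta$ s.t. $\zeta\ge L(-r_i,\mu,t)$ for all $i$; $\mathbb{P}^N_{\pi_R}$ is the $N$-fold product measure of the i.i.d. sample. *)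

theory Defs
  imports "HOL-Probability.Probability"
begin

definition EVaR :: "'a measure \<Rightarrow> real \<Rightarrow> ('a \<Rightarrow> real) \<Rightarrow> real" where
  "EVaR M \<alpha> X = (INF z \<in> {0<..}. (1 / z) * ln ((\<integral>x. exp (z * X x) \<partial>M) / \<alpha>))"

definition Lfun :: "real \<Rightarrow> real \<Rightarrow> real \<Rightarrow> real \<Rightarrow> real" where
  "Lfun \<alpha> x \<mu> t = t * (\<mu> + exp (x / t - \<mu> - ln \<alpha> - 1))"

definition zeta_star :: "real \<Rightarrow> nat \<Rightarrow> (nat \<Rightarrow> real) \<Rightarrow> real \<Rightarrow> real \<Rightarrow> real" where
  "zeta_star \<alpha> N r \<mu> t = Max ((\<lambda>k. Lfun \<alpha> (- r k) \<mu> t) ` {..<N})"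

end

theory Submission imports Defs begin

lemma L_mono: assumes "t > 0" "x \<le> y" shows "Lfun \<alpha> x \<mu> t \<le> Lfun \<alpha> y \<mu> t"
  using assms by (auto simp: Lfun_def divide_right_mono intro!: mult_left_mono)

lemma L_lower: assumes "t>0" "0<\<alpha>" "\<alpha>\<le>1" shows "x \<le> Lfun \<alpha> x \<mu> t"
proof -
  let ?s = "x / t - \<mu> - ln \<alpha> - 1"
  have "1 + ?s \<le> exp ?s" by (rule exp_ge_add_one_self)
  hence "t * (\<mu> + 1 + ?s) \<le> t * (\<mu> + exp ?s)" using assms by (intro mult_left_mono) auto
  moreover have "t * (\<mu> + 1 + ?s) = x - t * ln \<alpha>" using assms by (simp add: field_simps)
  moreover have "t * ln \<alpha> \<le> 0" using assms by (intro mult_nonneg_nonpos) auto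
  ultimately show ?thesis unfolding Lfun_def by linarith
qed

lemma L_meas: "(\<lambda>x. Lfun \<alpha> (- x) \<mu> t) \<in> borel_measurable borel"
  unfolding Lfun_def by measurable

lemma hEVaR:
  fixes M :: "real measure"
  assumes "prob_space M" and sM: "sets M = sets borel"
    and AE: "AE r in M. - a \<le> r \<and> r \<le> b"
    and "0 < \<alpha>" and "\<alpha> \<le> 1" and "t > 0"
  shows "EVaR M \<alpha> (\<lambda>x. - x) \<le> (\<integral>x. Lfun \<alpha> (- x) \<mu> t \<partial>M)"
proof -
  interpret prob_space M by fact
  have mc: "measurable M N = measurable borel N" for N :: "real measure"
    by (rule measurable_cong_sets[OF sM refl])
  define I where "I z = (\<integral>x. exp (z * - x) \<partial>M)" for z
  have intI: "integrable M (\<lambda>x. exp (z * - x))" if "z > 0" for z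
  proof (rule integrable_const_bound[where B="exp (z * a)"])
    show "AE x in M. norm (exp (z * - x)) \<le> exp (z * a)"
      using AE
    proof eventually_elim
      case (elim x)
      have "z * (- x) \<le> z * a" using elim that by (intro mult_left_mono) auto
      thus ?case by simp
    qed
    show "(\<lambda>x. exp (z * - x)) \<in> borel_measurable M" unfolding mc by measurable
  qed
  have Ilow: "exp (z * - b) \<le> I z" if "z > 0" for z
  proof -
    have "(\<integral>x. exp (z * - b) \<partial>M) \<le> I z" unfolding I_def
      using AE intI[OF that] 
      by (intro integral_mono_AE) (auto elim!: eventually_mono simp: that)
    thus ?thesis by (simp add: prob_space)
  qed
  have bdd: "bdd_below ((\<lambda>z. (1 / z) * ln ((\<integral>x. exp (z * - x) \<partial>M) / \<alpha>)) ` {0<..})"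
  proof (rule bdd_belowI2[where m="- b"])
    fix z :: real assume z: "z \<in> {0<..}"
    have Ipos: "I z > 0" using Ilow[of z] z exp_gt_zero[of "z * - b"] by (metis greaterThan_iff less_le_trans)
    have "ln (exp (z * - b)) \<le> ln (I z)" using Ilow[of z] z Ipos by (subst ln_le_cancel_iff) auto
    moreover have "ln (I z / \<alpha>) = ln (I z) - ln \<alpha>" using Ipos assms by (simp add: ln_div)
    moreover have "ln \<alpha> \<le> 0" using assms by simp
    ultimately have "z * - b \<le> ln (I z / \<alpha>)" by simp
    hence "(1/z) * (z * - b) \<le> (1/z) * ln (I z / \<alpha>)" using z by (intro mult_left_mono) auto
    thus "- b \<le> (1 / z) * ln ((\<integral>x. exp (z * - x) \<partial>M) / \<alpha>)" using z by (simp add: I_def)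
  qed
  have "EVaR M \<alpha> (\<lambda>x. - x) \<le> (1 / (1/t)) * ln (I (1/t) / \<alpha>)"
    unfolding EVaR_def I_def using \<open>t > 0\<close> by (intro cINF_lower[OF bdd]) auto
  also have "\<dots> = t * ln (I (1/t) / \<alpha>)" by simp
  also have "\<dots> \<le> t * \<mu> + t * exp (- \<mu> - ln \<alpha> - 1) * I (1/t)"
  proof -
    define w where "w = I (1/t) / \<alpha>"
    have Ipos: "I (1/t) > 0" using Ilow[of "1/t"] \<open>t>0\<close> exp_gt_zero[of "1/t * - b"] by (metis divide_pos_pos zero_less_one less_le_trans)
    have wpos: "w > 0" using Ipos assms unfolding w_def by simp
    have "ln w - \<mu> \<le> exp (ln w - \<mu> - 1)" using exp_ge_add_one_self[of "ln w - \<mu> - 1"] by simp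
    also have "exp (ln w - \<mu> - 1) = w * exp (- \<mu> - 1)" using wpos
      by (simp add: exp_diff exp_minus exp_add field_simps)
    also have "w * exp (- \<mu> - 1) = exp (- \<mu> - ln \<alpha> - 1) * I (1/t)"
      using assms by (simp add: w_def exp_diff exp_minus exp_add field_simps)
    finally have "ln w \<le> \<mu> + exp (- \<mu> - ln \<alpha> - 1) * I (1/t)" by simp
    hence "t * ln w \<le> t * (\<mu> + exp (- \<mu> - ln \<alpha> - 1) * I (1/t))" using \<open>t>0\<close> by (intro mult_left_mono) auto
    thus ?thesis by (simp add: w_def algebra_simps)
  qed
  also have "\<dots> = (\<integral>x. Lfun \<alpha> (- x) \<mu> t \<partial>M)"
  proof -
    have eq: "Lfun \<alpha> (- x) \<mu> t = t * \<mu> + (t * exp (- \<mu> - ln \<alpha> - 1)) * exp ((1/t) * - x)" for x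
    proof -
      have "- x / t - \<mu> - ln \<alpha> - 1 = (1/t) * - x + (- \<mu> - ln \<alpha> - 1)" by (simp add: field_simps)
      hence "exp (- x / t - \<mu> - ln \<alpha> - 1) = exp ((1/t) * - x) * exp (- \<mu> - ln \<alpha> - 1)"
        by (metis exp_add)
      thus ?thesis unfolding Lfun_def by (simp add: algebra_simps)
    qed
    have "(\<integral>x. Lfun \<alpha> (- x) \<mu> t \<partial>M) = (\<integral>x. t * \<mu> + (t * exp (- \<mu> - ln \<alpha> - 1)) * exp ((1/t) * - x) \<partial>M)"
      by (simp only: eq)
    also have "\<dots> = t * \<mu> + (t * exp (- \<mu> - ln \<alpha> - 1)) * I (1/t)"
    proof -
      have ii: "integrable M (\<lambda>x. exp ((1/t) * - x))" using intI[of "1/t"] \<open>t>0\<close> by simp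
      have "(\<integral>x. t * \<mu> + (t * exp (- \<mu> - ln \<alpha> - 1)) * exp ((1/t) * - x) \<partial>M)
          = (\<integral>x. t * \<mu> \<partial>M) + (\<integral>x. (t * exp (- \<mu> - ln \<alpha> - 1)) * exp ((1/t) * - x) \<partial>M)"
        using ii by (intro Bochner_Integration.integral_add) auto
      thus ?thesis using prob_space by (simp add: I_def)
    qed
    finally show ?thesis by simp
  qed
  finally show ?thesis .
qed

lemma hD:
  fixes M :: "real measure"
  assumes "prob_space M" and sM: "sets M = sets borel"
    and AE: "AE r in M. - a \<le> r \<and> r \<le> b"
    and "0 < \<alpha>" and "\<alpha> \<le> 1" and t: "t > 0"
    and "0 \<le> \<epsilon>" "\<epsilon> \<le> 1" and ms: "measure M {..<s} \<le> \<epsilon>"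
  shows "(\<integral>x. Lfun \<alpha> (- x) \<mu> t \<partial>M) \<le> Lfun \<alpha> (- s) \<mu> t * (1 - \<epsilon>) + Lfun \<alpha> a \<mu> t * \<epsilon>"
proof -
  interpret prob_space M by fact
  have mc: "measurable M N = measurable borel N" for N :: "real measure"
    by (rule measurable_cong_sets[OF sM refl])
  let ?f = "\<lambda>x. Lfun \<alpha> (- x) \<mu> t"
  have sp: "space M = UNIV" using sets_eq_imp_space_eq[OF sM] by simp
  have fmeas: "?f \<in> borel_measurable M" unfolding mc by (rule L_meas)
  have intf: "integrable M ?f"
  proof (rule integrable_const_bound[where B="\<bar>Lfun \<alpha> (- b) \<mu> t\<bar> + \<bar>Lfun \<alpha> a \<mu> t\<bar>"])
    show "AE x in M. norm (?f x) \<le> \<bar>Lfun \<alpha> (- b) \<mu> t\<bar> + \<bar>Lfun \<alpha> a \<mu> t\<bar>"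
      using AE
    proof eventually_elim
      case (elim x)
      have "Lfun \<alpha> (- b) \<mu> t \<le> ?f x" "?f x \<le> Lfun \<alpha> a \<mu> t" using elim t by (auto intro!: L_mono)
      thus ?case by auto
    qed
  qed fact
  show ?thesis
  proof (cases "- s \<le> a")
    case True
    let ?c = "Lfun \<alpha> (- s) \<mu> t" and ?d = "Lfun \<alpha> a \<mu> t - Lfun \<alpha> (- s) \<mu> t"
    have dpos: "?d \<ge> 0" using L_mono[OF t True] by simp
    have intg: "integrable M (\<lambda>x. ?c + ?d * indicator {..<s} x)"
      by (intro Bochner_Integration.integrable_add integrable_mult_right integrable_real_indicator) (auto simp: sM less_top[symmetric])
    have "(\<integral>x. ?f x \<partial>M) \<le> (\<integral>x. ?c + ?d * indicator {..<s} x \<partial>M)"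
    proof (rule integral_mono_AE[OF intf intg])
      show "AE x in M. ?f x \<le> ?c + ?d * indicator {..<s} x"
        using AE
      proof eventually_elim
        case (elim x)
        show ?case
        proof (cases "x < s")
          case True thus ?thesis using elim L_mono[OF t, of "- x" a] by simp
        next
          case False thus ?thesis using L_mono[OF t, of "- x" "- s"] by simp
        qed
      qed
    qed
    also have "\<dots> = ?c + ?d * measure M {..<s}"
    proof -
      have i1: "integrable M (\<lambda>x. ?d * indicator {..<s} x)"
        by (intro integrable_mult_right integrable_real_indicator) (auto simp: sM less_top[symmetric])
      have "(\<integral>x. ?c + ?d * indicator {..<s} x \<partial>M) = (\<integral>x. ?c \<partial>M) + (\<integral>x. ?d * indicator {..<s} x \<partial>M)"
        using i1 by (intro Bochner_Integration.integral_add) auto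
      thus ?thesis using prob_space by (simp add: sp)
    qed
    also have "\<dots> \<le> ?c + ?d * \<epsilon>" using dpos ms by (intro add_left_mono mult_left_mono) auto
    also have "\<dots> = Lfun \<alpha> (- s) \<mu> t * (1 - \<epsilon>) + Lfun \<alpha> a \<mu> t * \<epsilon>" by (simp add: algebra_simps)
    finally show ?thesis .
  next
    case False
    have "(\<integral>x. ?f x \<partial>M) \<le> (\<integral>x. Lfun \<alpha> a \<mu> t \<partial>M)"
      by (rule integral_mono_AE[OF intf]) (use AE in \<open>auto elim!: eventually_mono intro!: L_mono[OF t]\<close>)
    also have "\<dots> = Lfun \<alpha> a \<mu> t" by (simp add: prob_space)
    also have "\<dots> \<le> Lfun \<alpha> (- s) \<mu> t * (1 - \<epsilon>) + Lfun \<alpha> a \<mu> t * \<epsilon>"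
    proof -
      have "Lfun \<alpha> a \<mu> t * (1 - \<epsilon>) \<le> Lfun \<alpha> (- s) \<mu> t * (1 - \<epsilon>)"
        using False assms by (intro mult_right_mono L_mono[OF t]) auto
      thus ?thesis by (simp add: algebra_simps)
    qed
    finally show ?thesis .
  qed
qed

theorem corollary6:
  fixes M :: "real measure" and a b \<alpha> \<epsilon> :: real and N :: nat
  assumes "prob_space M" and "sets M = sets borel"
    and "a > 0" and "b > 0"
    and "AE r in M. - a \<le> r \<and> r \<le> b"
    and "0 < \<alpha>" and "\<alpha> \<le> 1"
    and "0 \<le> \<epsilon>" and "\<epsilon> \<le> 1"
    and "N \<ge> 1"
  shows "measure (PiM {..<N} (\<lambda>_. M))
           {r \<in> space (PiM {..<N} (\<lambda>_. M)).
              (INF (\<mu>, t) \<in> UNIV \<times> {0<..}.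
                 zeta_star \<alpha> N r \<mu> t * (1 - \<epsilon>) + Lfun \<alpha> a \<mu> t * \<epsilon>)
              \<ge> EVaR M \<alpha> (\<lambda>x. - x)}
         \<ge> 1 - (1 - \<epsilon>) ^ N"
proof -
  interpret prob_space M by fact
  note sM = assms(2) and AE = assms(5)
  have sp: "space M = UNIV" using sets_eq_imp_space_eq[OF sM] by simp
  define P where "P = PiM {..<N} (\<lambda>_. M)"
  interpret PP: finite_product_prob_space "\<lambda>_. M" "{..<N}"
    by unfold_locales simp
  define E where "E = EVaR M \<alpha> (\<lambda>x. - x)"
  define phi where "phi r = (INF (\<mu>, t) \<in> UNIV \<times> {0<..}.
                 zeta_star \<alpha> N r \<mu> t * (1 - \<epsilon>) + Lfun \<alpha> a \<mu> t * \<epsilon>)" for r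
  define G where "G = {r \<in> space P. phi r \<ge> E}"
  have key: "r \<in> G" if r: "r \<in> space P" and k: "k < N" and mk: "measure M {..<r k} \<le> \<epsilon>" for r k
  proof -
    have "E \<le> phi r" unfolding phi_def
    proof (rule cINF_greatest)
      show "UNIV \<times> {0<..} \<noteq> ({} :: (real \<times> real) set)" by auto
      fix p :: "real \<times> real" assume "p \<in> UNIV \<times> {0<..}"
      then obtain \<mu> t where p: "p = (\<mu>, t)" and t: "t > 0" by auto
      have "E \<le> (\<integral>x. Lfun \<alpha> (- x) \<mu> t \<partial>M)" unfolding E_def
        using hEVaR[OF assms(1,2,5,6,7) t] .
      also have "\<dots> \<le> Lfun \<alpha> (- r k) \<mu> t * (1 - \<epsilon>) + Lfun \<alpha> a \<mu> t * \<epsilon>"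
        using hD[OF assms(1,2,5,6,7) t assms(8,9) mk] .
      also have "\<dots> \<le> zeta_star \<alpha> N r \<mu> t * (1 - \<epsilon>) + Lfun \<alpha> a \<mu> t * \<epsilon>"
      proof -
        have "Lfun \<alpha> (- r k) \<mu> t \<le> zeta_star \<alpha> N r \<mu> t"
          unfolding zeta_star_def using k by (intro Max_ge) auto
        thus ?thesis using assms(9) by (intro add_right_mono mult_right_mono) auto
      qed
      finally show "E \<le> (case p of (\<mu>, t) \<Rightarrow> zeta_star \<alpha> N r \<mu> t * (1 - \<epsilon>) + Lfun \<alpha> a \<mu> t * \<epsilon>)"
        by (simp add: p)
    qed
    thus ?thesis using r by (simp add: G_def)
  qed
  define mx where "mx r = Max ((\<lambda>k. - r k) ` {..<N})" for r :: "nat \<Rightarrow> real"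
  define psi where "psi m = (INF (\<mu>, t) \<in> UNIV \<times> {0<..}. Lfun \<alpha> m \<mu> t * (1 - \<epsilon>) + Lfun \<alpha> a \<mu> t * \<epsilon>)" for m
  have Nne: "{..<N} \<noteq> {}" using assms(10) by (auto simp: lessThan_empty_iff)
  have phipsi: "phi r = psi (mx r)" for r
    unfolding phi_def psi_def
  proof (rule INF_cong[OF refl])
    fix p :: "real \<times> real" assume "p \<in> UNIV \<times> {0<..}"
    then obtain \<mu> t where p: "p = (\<mu>, t)" and t: "t > 0" by auto
    have mono: "mono (\<lambda>x. Lfun \<alpha> x \<mu> t)" by (auto intro!: monoI L_mono[OF t])
    have "zeta_star \<alpha> N r \<mu> t = Max ((\<lambda>x. Lfun \<alpha> x \<mu> t) ` ((\<lambda>k. - r k) ` {..<N}))"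
      by (simp add: zeta_star_def image_image)
    also have "\<dots> = Lfun \<alpha> (mx r) \<mu> t" unfolding mx_def
      using Nne by (intro mono_Max_commute[symmetric, OF mono]) auto
    finally show "(case p of (\<mu>, t) \<Rightarrow> zeta_star \<alpha> N r \<mu> t * (1 - \<epsilon>) + Lfun \<alpha> a \<mu> t * \<epsilon>) =
         (case p of (\<mu>, t) \<Rightarrow> Lfun \<alpha> (mx r) \<mu> t * (1 - \<epsilon>) + Lfun \<alpha> a \<mu> t * \<epsilon>)"
      by (simp add: p)
  qed
  have psimono: "mono psi"
  proof (rule monoI)
    fix x y :: real assume xy: "x \<le> y"
    show "psi x \<le> psi y" unfolding psi_def
    proof (rule cINF_mono)
      show "UNIV \<times> {0<..} \<noteq> ({} :: (real \<times> real) set)" by auto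
      show "bdd_below ((\<lambda>(\<mu>, t). Lfun \<alpha> x \<mu> t * (1 - \<epsilon>) + Lfun \<alpha> a \<mu> t * \<epsilon>) ` (UNIV \<times> {0<..}))"
      proof (rule bdd_belowI2[where m="x * (1 - \<epsilon>) + a * \<epsilon>"])
        fix p :: "real \<times> real" assume "p \<in> UNIV \<times> {0<..}"
        then obtain \<mu> t where p: "p = (\<mu>, t)" and t: "t > 0" by auto
        have "x * (1 - \<epsilon>) \<le> Lfun \<alpha> x \<mu> t * (1 - \<epsilon>)" "a * \<epsilon> \<le> Lfun \<alpha> a \<mu> t * \<epsilon>"
          using assms L_lower[OF t assms(6,7)] by (auto intro!: mult_right_mono)
        thus "x * (1 - \<epsilon>) + a * \<epsilon> \<le> (case p of (\<mu>, t) \<Rightarrow> Lfun \<alpha> x \<mu> t * (1 - \<epsilon>) + Lfun \<alpha> a \<mu> t * \<epsilon>)"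
          by (simp add: p)
      qed
      fix p :: "real \<times> real" assume pin: "p \<in> UNIV \<times> {0<..}"
      then obtain \<mu> t where p: "p = (\<mu>, t)" and t: "t > 0" by auto
      have "Lfun \<alpha> x \<mu> t * (1 - \<epsilon>) \<le> Lfun \<alpha> y \<mu> t * (1 - \<epsilon>)"
        using assms(9) L_mono[OF t xy] by (intro mult_right_mono) auto
      thus "\<exists>n\<in>UNIV \<times> {0<..}. (case n of (\<mu>, t) \<Rightarrow> Lfun \<alpha> x \<mu> t * (1 - \<epsilon>) + Lfun \<alpha> a \<mu> t * \<epsilon>)
            \<le> (case p of (\<mu>, t) \<Rightarrow> Lfun \<alpha> y \<mu> t * (1 - \<epsilon>) + Lfun \<alpha> a \<mu> t * \<epsilon>)"
        using pin by (intro bexI[of _ p]) (auto simp: p)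
    qed
  qed
  have psim: "psi \<in> borel_measurable borel" by (rule borel_measurable_mono[OF psimono])
  have mxm: "mx \<in> borel_measurable P" unfolding mx_def[abs_def]
  proof (rule borel_measurable_Max)
    fix k assume k: "k \<in> {..<N}"
    have "(\<lambda>r. r k) \<in> measurable P M" unfolding P_def
      by (rule measurable_component_singleton[OF k])
    hence "(\<lambda>r. r k) \<in> borel_measurable P"
      using measurable_cong_sets[OF refl sM, of P] by simp
    thus "(\<lambda>r. - r k) \<in> borel_measurable P" by (rule borel_measurable_uminus)
  qed simp
  have compm: "(\<lambda>r. psi (mx r)) \<in> borel_measurable P" using measurable_compose[OF mxm psim] .
  have Gset: "G = (\<lambda>r. psi (mx r)) -` {E..} \<inter> space P" by (auto simp: G_def phipsi)
  have Gsets: "G \<in> sets P" unfolding Gset by (rule measurable_sets[OF compm]) simp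
  interpret Q: prob_space P unfolding P_def by (rule prob_space_PiM) (rule assms(1))
  have PP1: "measure P (space P) = 1" by (rule Q.prob_space)
  have main: "measure P G \<ge> 1 - (1 - \<epsilon>) ^ N"
  proof (cases "\<epsilon> = 1")
    case True
    have "G = space P"
    proof
      show "G \<subseteq> space P" by (auto simp: G_def)
      show "space P \<subseteq> G" using key[of _ 0] assms(10) True by auto
    qed
    thus ?thesis using PP1 True assms(10) by simp
  next
    case False
    hence eps1: "\<epsilon> < 1" using assms(9) by simp
    define T where "T = {y. measure M {..<y} \<le> \<epsilon>}"
    have T1: "- a - 1 \<in> T"
    proof -
      have "AE x in M. x \<notin> {..< - a - 1}" using AE by (auto elim!: eventually_mono)
      hence "measure M {..< - a - 1} = 0" by (subst prob_eq_0) (auto simp: sM)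
      thus ?thesis using assms(8) by (simp add: T_def)
    qed
    have T2: "y \<le> b" if "y \<in> T" for y
    proof (rule ccontr)
      assume ny: "\<not> y \<le> b"
      have "AE x in M. x \<in> {..< y}" using AE by eventually_elim (use ny in auto)
      hence "measure M {..< y} = 1" by (subst prob_eq_1) (auto simp: sM)
      thus False using that eps1 by (simp add: T_def)
    qed
    have Tne: "T \<noteq> {}" using T1 by auto
    have Tbdd: "bdd_above T" using T2 by (intro bdd_aboveI) auto
    define ys where "ys = Sup T"
    have incinv: "inverse (real (Suc n)) \<le> inverse (real (Suc m))" if "m \<le> n" for m n
      using that by (intro le_imp_inverse_le) auto
    have h1: "measure M {..<ys} \<le> \<epsilon>"
    proof -
      define A where "A n = {..< ys - inverse (real (Suc n))}" for n
      have inc: "incseq A" unfolding incseq_def A_def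
      proof (intro allI impI subsetI)
        fix m n x assume mn: "m \<le> n" and "x \<in> {..< ys - inverse (real (Suc m))}"
        moreover have "ys - inverse (real (Suc m)) \<le> ys - inverse (real (Suc n))" using incinv[OF mn] by linarith
        ultimately show "x \<in> {..< ys - inverse (real (Suc n))}" unfolding lessThan_iff by linarith
      qed
      have U: "(\<Union>n. A n) = {..<ys}"
      proof
        show "(\<Union>n. A n) \<subseteq> {..<ys}"
        proof
          fix x assume "x \<in> (\<Union>n. A n)"
          then obtain n where "x < ys - inverse (real (Suc n))" by (auto simp: A_def)
          moreover have "inverse (real (Suc n)) > 0" by simp
          ultimately show "x \<in> {..<ys}" unfolding lessThan_iff by linarith
        qed
        show "{..<ys} \<subseteq> (\<Union>n. A n)"
        proof
          fix x assume "x \<in> {..<ys}"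
          then obtain n where "inverse (real (Suc n)) < ys - x" using reals_Archimedean[of "ys - x"] by auto
          hence "x \<in> A n" unfolding A_def lessThan_iff by linarith
          thus "x \<in> (\<Union>n. A n)" by blast
        qed
      qed
      have lim: "(\<lambda>n. measure M (A n)) \<longlonglongrightarrow> measure M {..<ys}"
      proof -
        have "range A \<subseteq> sets M" by (auto simp: A_def sM)
        thus ?thesis using finite_Lim_measure_incseq[OF _ inc] U by simp
      qed
      show ?thesis
      proof (rule LIMSEQ_le_const2[OF lim], intro exI allI impI)
        fix n
        have "ys - inverse (real (Suc n)) < ys" by simp
        then obtain s where s: "s \<in> T" "ys - inverse (real (Suc n)) < s"
          using less_cSupE[OF _ Tne] unfolding ys_def by blast
        have "measure M (A n) \<le> measure M {..<s}" unfolding A_def using s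
          by (intro finite_measure_mono) (auto simp: sM)
        also have "\<dots> \<le> \<epsilon>" using s by (simp add: T_def)
        finally show "measure M (A n) \<le> \<epsilon>" .
      qed
    qed
    have h2: "measure M {ys<..} \<le> 1 - \<epsilon>"
    proof -
      define B where "B n = {ys + inverse (real (Suc n))..}" for n
      have inc: "incseq B" unfolding incseq_def B_def
      proof (intro allI impI subsetI)
        fix m n x assume mn: "m \<le> n" and "x \<in> {ys + inverse (real (Suc m))..}"
        moreover have "ys + inverse (real (Suc n)) \<le> ys + inverse (real (Suc m))" using incinv[OF mn] by linarith
        ultimately show "x \<in> {ys + inverse (real (Suc n))..}" unfolding atLeast_iff by linarith
      qed
      have U: "(\<Union>n. B n) = {ys<..}"
      proof
        show "(\<Union>n. B n) \<subseteq> {ys<..}"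
        proof
          fix x assume "x \<in> (\<Union>n. B n)"
          then obtain n where "ys + inverse (real (Suc n)) \<le> x" by (auto simp: B_def)
          moreover have "inverse (real (Suc n)) > 0" by simp
          ultimately show "x \<in> {ys<..}" unfolding greaterThan_iff by linarith
        qed
        show "{ys<..} \<subseteq> (\<Union>n. B n)"
        proof
          fix x assume "x \<in> {ys<..}"
          then obtain n where "inverse (real (Suc n)) < x - ys" using reals_Archimedean[of "x - ys"] by auto
          hence "x \<in> B n" unfolding B_def atLeast_iff by linarith
          thus "x \<in> (\<Union>n. B n)" by blast
        qed
      qed
      have lim: "(\<lambda>n. measure M (B n)) \<longlonglongrightarrow> measure M {ys<..}"
      proof -
        have "range B \<subseteq> sets M" by (auto simp: B_def sM)
        thus ?thesis using finite_Lim_measure_incseq[OF _ inc] U by simp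
      qed
      show ?thesis
      proof (rule LIMSEQ_le_const2[OF lim], intro exI allI impI)
        fix n
        let ?c = "ys + inverse (real (Suc n))"
        have "?c \<notin> T"
        proof
          assume "?c \<in> T"
          hence "?c \<le> ys" unfolding ys_def by (rule cSup_upper[OF _ Tbdd])
          thus False by simp
        qed
        hence gt: "measure M {..< ?c} > \<epsilon>" by (simp add: T_def)
        have "B n = space M - {..< ?c}" unfolding B_def sp by auto
        hence "measure M (B n) = 1 - measure M {..< ?c}" using prob_compl[of "{..< ?c}"] by (simp add: sM)
        thus "measure M (B n) \<le> 1 - \<epsilon>" using gt by simp
      qed
    qed
    define Good where "Good = {r \<in> space P. \<exists>k<N. r k \<le> ys}"
    define Bad where "Bad = PiE {..<N} (\<lambda>_. {ys<..})"
    have spP: "space P = PiE {..<N} (\<lambda>_. UNIV)" unfolding P_def by (simp add: space_PiM sp)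
    have GB: "Good = space P - Bad"
    proof
      show "Good \<subseteq> space P - Bad"
      proof
        fix r assume "r \<in> Good"
        then obtain k where "r \<in> space P" "k < N" "r k \<le> ys" by (auto simp: Good_def)
        moreover have "r \<notin> Bad"
        proof
          assume "r \<in> Bad"
          hence "r k \<in> {ys<..}" using \<open>k < N\<close> unfolding Bad_def by (auto dest: PiE_mem)
          thus False using \<open>r k \<le> ys\<close> by simp
        qed
        ultimately show "r \<in> space P - Bad" by blast
      qed
      show "space P - Bad \<subseteq> Good"
      proof
        fix r assume r: "r \<in> space P - Bad"
        hence rP: "r \<in> PiE {..<N} (\<lambda>_. UNIV)" using spP by blast
        have "\<exists>k<N. r k \<le> ys"
        proof (rule ccontr)
          assume "\<not> (\<exists>k<N. r k \<le> ys)"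
          hence "\<forall>k<N. r k \<in> {ys<..}" by auto
          hence "r \<in> Bad" using rP unfolding Bad_def PiE_def Pi_def by auto
          thus False using r by blast
        qed
        thus "r \<in> Good" using r by (simp add: Good_def)
      qed
    qed
    have Bads: "Bad \<in> sets P" unfolding Bad_def P_def by (rule sets_PiM_I_finite) (auto simp: sM)
    have "measure P Bad = (\<Prod>i\<in>{..<N}. measure M {ys<..})" unfolding Bad_def P_def
      by (rule PP.prob_times) (auto simp: sM)
    also have "\<dots> = measure M {ys<..} ^ N" by simp
    also have "\<dots> \<le> (1 - \<epsilon>) ^ N" using h2 by (intro power_mono) auto
    finally have mBad: "measure P Bad \<le> (1 - \<epsilon>) ^ N" .
    have mGood: "measure P Good = 1 - measure P Bad"
      unfolding GB using Bads Q.prob_compl by simp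
    have GoodG: "Good \<subseteq> G"
    proof
      fix r assume "r \<in> Good"
      then obtain k where r: "r \<in> space P" "k < N" "r k \<le> ys" by (auto simp: Good_def)
      have "measure M {..<r k} \<le> measure M {..<ys}" using r by (intro finite_measure_mono) (auto simp: sM)
      thus "r \<in> G" using key[OF r(1,2)] h1 by simp
    qed
    have "measure P Good \<le> measure P G" using GoodG Gsets
      by (intro Q.finite_measure_mono) auto
    thus ?thesis using mGood mBad by simp
  qed
  thus ?thesis unfolding G_def phi_def P_def E_def .
qed

end
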